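(* A function $a\in C^2([-\pi,\pi])$ satisfies $\int_{-\pi}^\pi a(x)dx=0$ and solves $$\Big(\int_{-\pi}^x a(\bar x)\,d\bar x\Big)a'(x)-a(x)^2+\frac1\pi\int_{-\pi}^\pi a^2(\bar x)\,d\bar x=0\quad\text{for all }x\in[-\pi,\pi]$$ if and only if either $a=\mu\cos(kx)$ for some $\mu\in\mathbb R$ and integer $k\ge1$, or $a=\mu\sin\big(\tfrac{2k+1}{2}x\big)$ for some $\mu\in\mathbb R$ and integer $k\ge0$. *)

theory Defs
  imports "HOL-Analysis.Analysis"
begin

text \<open>Twice continuously differentiable on a set S, with derivatives taken within S
  (one-sided at the endpoints of a closed interval).\<close>
definition C2_on :: "real set \<Rightarrow> (real \<Rightarrow> real) \<Rightarrow> bool" where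
  "C2_on S f \<longleftrightarrow> (\<exists>f' f''.
      (\<forall>x\<in>S. (f has_real_derivative f' x) (at x within S)) \<and>
      (\<forall>x\<in>S. (f' has_real_derivative f'' x) (at x within S)) \<and>
      continuous_on S f'')"

end

theory Submission
  imports Defs
begin


lemma deriv_unique_I:
  assumes "x \<in> {-pi..pi}"
    "(f has_real_derivative d1) (at x within {-pi..pi})"
    "(f has_real_derivative d2) (at x within {-pi..pi})"
  shows "d1 = d2"
proof -
  have "-pi < pi" by (simp add: pi_gt_zero)
  then show ?thesis
    using assms vector_derivative_unique_within_closed_interval[of "-pi" pi x f d1 d2]
    by (simp add: has_real_derivative_iff_has_vector_derivative)
qed

lemma const_I:
  fixes f :: "real \<Rightarrow> real"
  assumes "finite K" "continuous_on {-pi..pi} f"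
    "\<And>x. x \<in> {-pi..pi} - K \<Longrightarrow> (f has_real_derivative 0) (at x within {-pi..pi})"
    "x \<in> {-pi..pi}"
  shows "f x = f (-pi)"
proof (rule has_derivative_zero_unique_strong_interval[OF assms(1,2) refl _ assms(4)])
  fix y assume "y \<in> {-pi..pi} - K"
  then have "(f has_derivative (*) 0) (at y within {-pi..pi})" using assms(3) by (simp add: has_field_derivative_def)
  moreover have "((*) (0::real)) = (\<lambda>h. 0)" by auto
  ultimately show "(f has_derivative (\<lambda>h. 0)) (at y within {-pi..pi})" by simp
qed

lemma isolated_zero:
  fixes A :: "real \<Rightarrow> real"
  assumes "(A has_real_derivative d) (at z within S)" "A z = 0" "d \<noteq> 0"
  shows "\<exists>e>0. \<forall>y\<in>S. y \<noteq> z \<and> dist y z < e \<longrightarrow> A y \<noteq> 0"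
proof -
  have "((\<lambda>y. (A y - A z) / (y - z)) \<longlongrightarrow> d) (at z within S)"
    using assms(1) by (simp add: has_field_derivative_iff)
  then have "\<forall>\<^sub>F y in at z within S. (A y - A z) / (y - z) \<noteq> 0"
    using assms(3) tendsto_imp_eventually_ne by blast
  then obtain d where d: "d > 0" "\<forall>y\<in>S. y \<noteq> z \<and> dist y z < d \<longrightarrow> (A y - A z) / (y - z) \<noteq> 0"
    unfolding eventually_at by blast
  have "\<forall>y\<in>S. y \<noteq> z \<and> dist y z < d \<longrightarrow> A y \<noteq> 0"
  proof (intro ballI impI)
    fix y assume "y \<in> S" "y \<noteq> z \<and> dist y z < d"
    then have "(A y - A z) / (y - z) \<noteq> 0" using d by blast
    then show "A y \<noteq> 0" using assms(2) by auto
  qed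
  then show ?thesis using d(1) by blast
qed

lemma finite_zeros:
  fixes A :: "real \<Rightarrow> real"
  assumes cont: "continuous_on {-pi..pi} A"
    and iso: "\<And>z. z \<in> {-pi..pi} \<Longrightarrow> A z = 0 \<Longrightarrow> \<exists>e>0. \<forall>y\<in>{-pi..pi}. y \<noteq> z \<and> dist y z < e \<longrightarrow> A y \<noteq> 0"
  shows "finite {x\<in>{-pi..pi}. A x = 0}"
proof (rule ccontr)
  let ?Z = "{x\<in>{-pi..pi}. A x = 0}"
  assume inf: "infinite ?Z"
  have "closed ?Z" using continuous_closed_preimage_constant[OF cont] by simp
  moreover have "bounded ?Z" by (rule bounded_subset[OF bounded_closed_interval]) auto
  ultimately have "compact ?Z" by (simp add: compact_eq_bounded_closed)
  then obtain z where z: "z \<in> ?Z" "z islimpt ?Z"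
    using inf unfolding compact_eq_Bolzano_Weierstrass by blast
  then obtain e where e: "e > 0" "\<forall>y\<in>{-pi..pi}. y \<noteq> z \<and> dist y z < e \<longrightarrow> A y \<noteq> 0"
    using iso by blast
  obtain y where y: "y \<in> ?Z" "y \<noteq> z" "dist y z < e" using z(2) e(1) unfolding islimpt_approachable by blast
  then have "A y \<noteq> 0" using e(2) by blast
  then show False using y(1) by simp
qed



lemma ftc_I:
  fixes G g :: "real \<Rightarrow> real"
  assumes "\<forall>x\<in>{-pi..pi}. (G has_real_derivative g x) (at x within {-pi..pi})"
    "x \<in> {-pi..pi}"
  shows "(g has_integral (G x - G (-pi))) {-pi..x}"
proof -
  have sub: "{-pi..x} \<subseteq> {-pi..pi}" using assms(2) by auto
  show ?thesis
  proof (rule fundamental_theorem_of_calculus)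
    show "-pi \<le> x" using assms(2) by auto
    fix y assume "y \<in> {-pi..x}"
    then have "(G has_real_derivative g y) (at y within {-pi..pi})" using assms(1) sub by auto
    then have "(G has_real_derivative g y) (at y within {-pi..x})"
      using DERIV_subset sub by blast
    then show "(G has_vector_derivative g y) (at y within {-pi..x})"
      by (simp add: has_real_derivative_iff_has_vector_derivative)
  qed
qed

lemma if_dir:
  fixes a a' g g' G H :: "real \<Rightarrow> real" and \<mu> :: real
  assumes deriv: "\<forall>x\<in>{-pi..pi}. (a has_real_derivative a' x) (at x within {-pi..pi})"
    and eq: "\<forall>x\<in>{-pi..pi}. a x = \<mu> * g x"
    and gd: "\<forall>x\<in>{-pi..pi}. (g has_real_derivative g' x) (at x within {-pi..pi})"
    and Gd: "\<forall>x\<in>{-pi..pi}. (G has_real_derivative g x) (at x within {-pi..pi})"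
    and G0: "G (-pi) = 0" and G1: "G pi = 0"
    and W: "\<forall>x\<in>{-pi..pi}. G x * g' x - (g x)^2 = -1"
    and Hd: "\<forall>x\<in>{-pi..pi}. (H has_real_derivative (g x)^2) (at x within {-pi..pi})"
    and H1: "H pi - H (-pi) = pi"
  shows "(integral {-pi..pi} a = 0 \<and>
          (\<forall>x\<in>{-pi..pi}. integral {-pi..x} a * a' x - (a x)^2
              + (1/pi) * integral {-pi..pi} (\<lambda>t. (a t)^2) = 0))"
proof -
  have intA: "integral {-pi..x} a = \<mu> * G x" if x: "x \<in> {-pi..pi}" for x
  proof -
    have "(g has_integral (G x - G (-pi))) {-pi..x}" using ftc_I[OF Gd x] .
    then have "(g has_integral G x) {-pi..x}" using G0 by simp
    then have "((\<lambda>t. \<mu> * g t) has_integral \<mu> * G x) {-pi..x}"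
      by (rule has_integral_mult_right)
    then have "(a has_integral \<mu> * G x) {-pi..x}"
      by (rule has_integral_eq[rotated]) (use eq x in auto)
    then show ?thesis by (rule integral_unique)
  qed
  have intA2: "integral {-pi..pi} (\<lambda>t. (a t)^2) = \<mu>^2 * pi"
  proof -
    have "((\<lambda>t. (g t)^2) has_integral (H pi - H (-pi))) {-pi..pi}"
      using ftc_I[OF Hd] by simp
    then have "((\<lambda>t. (g t)^2) has_integral pi) {-pi..pi}" using H1 by simp
    then have "((\<lambda>t. \<mu>^2 * (g t)^2) has_integral \<mu>^2 * pi) {-pi..pi}"
      by (rule has_integral_mult_right)
    then have "((\<lambda>t. (a t)^2) has_integral \<mu>^2 * pi) {-pi..pi}"
      by (rule has_integral_eq[rotated]) (use eq in \<open>auto simp: power_mult_distrib\<close>)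
    then show ?thesis by (rule integral_unique)
  qed
  have a'eq: "a' x = \<mu> * g' x" if x: "x \<in> {-pi..pi}" for x
  proof -
    have "((\<lambda>t. \<mu> * g t) has_real_derivative \<mu> * g' x) (at x within {-pi..pi})"
      using gd x by (simp add: DERIV_cmult)
    then have "(a has_real_derivative \<mu> * g' x) (at x within {-pi..pi})"
      by (rule has_field_derivative_transform_within[where d=1]) (use x eq in auto)
    then show ?thesis using deriv_unique_I[OF x] deriv x by blast
  qed
  show ?thesis
  proof (intro conjI ballI)
    show "integral {-pi..pi} a = 0" using intA[of pi] G1 by simp
    fix x assume x: "x \<in> {-pi..pi}"
    have "integral {-pi..x} a * a' x - (a x)^2 + (1/pi) * integral {-pi..pi} (\<lambda>t. (a t)^2)
        = \<mu>^2 * (G x * g' x - (g x)^2) + \<mu>^2"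
      using intA[OF x] a'eq[OF x] intA2 eq x by (simp add: power2_eq_square ring_distribs)
    also have "\<dots> = 0" using W x by simp
    finally show "integral {-pi..x} a * a' x - (a x)^2 + (1/pi) * integral {-pi..pi} (\<lambda>t. (a t)^2) = 0" .
  qed
qed



lemma cos_case:
  fixes a a' :: "real \<Rightarrow> real"
  assumes deriv: "\<forall>x\<in>{-pi..pi}. (a has_real_derivative a' x) (at x within {-pi..pi})"
    and k: "k \<ge> 1" and eq: "\<forall>x\<in>{-pi..pi}. a x = \<mu> * cos (real k * x)"
  shows "(integral {-pi..pi} a = 0 \<and>
          (\<forall>x\<in>{-pi..pi}. integral {-pi..x} a * a' x - (a x)^2
              + (1/pi) * integral {-pi..pi} (\<lambda>t. (a t)^2) = 0))"
proof (rule if_dir[OF deriv eq])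
  have kp: "real k > 0" using k by simp
  show "\<forall>x\<in>{-pi..pi}. ((\<lambda>x. cos (real k * x)) has_real_derivative - real k * sin (real k * x)) (at x within {-pi..pi})"
    by (auto intro!: derivative_eq_intros)
  show "\<forall>x\<in>{-pi..pi}. ((\<lambda>x. sin (real k * x) / real k) has_real_derivative cos (real k * x)) (at x within {-pi..pi})"
    using kp by (auto intro!: derivative_eq_intros)
  show "sin (real k * - pi) / real k = 0" by (simp add: sin_npi)
  show "sin (real k * pi) / real k = 0" by (simp add: sin_npi)
  show "\<forall>x\<in>{-pi..pi}. sin (real k * x) / real k * (- real k * sin (real k * x)) - (cos (real k * x))^2 = -1"
  proof
    fix x :: real
    have "sin (real k * x) / real k * (- real k * sin (real k * x)) = - ((sin (real k * x))^2)" using kp by (simp add: power2_eq_square)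
    then show "sin (real k * x) / real k * (- real k * sin (real k * x)) - (cos (real k * x))^2 = -1"
      using sin_cos_squared_add[of "real k * x"] by linarith
  qed
  show "\<forall>x\<in>{-pi..pi}. ((\<lambda>x. x/2 + sin (2 * real k * x) / (4 * real k)) has_real_derivative (cos (real k * x))^2) (at x within {-pi..pi})"
  proof
    fix x :: real
    have "((\<lambda>x. x/2 + sin (2 * real k * x) / (4 * real k)) has_real_derivative 1/2 + cos (2 * real k * x) * (2 * real k) / (4 * real k)) (at x within {-pi..pi})"
      by (auto intro!: derivative_eq_intros)
    moreover have "1/2 + cos (2 * real k * x) * (2 * real k) / (4 * real k) = (cos (real k * x))^2"
      using kp cos_double_cos[of "real k * x"] by (simp add: field_simps)
    ultimately show "((\<lambda>x. x/2 + sin (2 * real k * x) / (4 * real k)) has_real_derivative (cos (real k * x))^2) (at x within {-pi..pi})"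
      by simp
  qed
  have "sin (2 * real k * pi) = 0" using sin_npi[of "2*k"] by (simp add: mult.assoc)
  then show "pi / 2 + sin (2 * real k * pi) / (4 * real k) - (- pi / 2 + sin (2 * real k * - pi) / (4 * real k)) = pi"
    by simp
qed

lemma sin_case_m:
  fixes a a' :: "real \<Rightarrow> real" and m :: real
  assumes deriv: "\<forall>x\<in>{-pi..pi}. (a has_real_derivative a' x) (at x within {-pi..pi})"
    and eq2: "\<forall>x\<in>{-pi..pi}. a x = \<mu> * sin (m * x)"
    and mp: "m > 0" and cm: "cos (m * pi) = 0" and s2m: "sin (2 * m * pi) = 0"
  shows "(integral {-pi..pi} a = 0 \<and>
          (\<forall>x\<in>{-pi..pi}. integral {-pi..x} a * a' x - (a x)^2
              + (1/pi) * integral {-pi..pi} (\<lambda>t. (a t)^2) = 0))"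
proof -
    have g1: "\<forall>x\<in>{-pi..pi}. ((\<lambda>x. sin (m * x)) has_real_derivative m * cos (m * x)) (at x within {-pi..pi})"
      by (auto intro!: derivative_eq_intros)
    have g2: "\<forall>x\<in>{-pi..pi}. ((\<lambda>x. - cos (m * x) / m) has_real_derivative sin (m * x)) (at x within {-pi..pi})"
      using mp by (auto intro!: derivative_eq_intros)
    have g3: "- cos (m * - pi) / m = 0" using cm by simp
    have g4: "- cos (m * pi) / m = 0" using cm by simp
    have g5: "\<forall>x\<in>{-pi..pi}. - cos (m * x) / m * (m * cos (m * x)) - (sin (m * x))^2 = -1"
    proof
      fix x :: real
      have "- cos (m * x) / m * (m * cos (m * x)) = - ((cos (m * x))^2)" using mp by (simp add: power2_eq_square)
      then show "- cos (m * x) / m * (m * cos (m * x)) - (sin (m * x))^2 = -1"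
        using sin_cos_squared_add[of "m * x"] by linarith
    qed
    have g6: "\<forall>x\<in>{-pi..pi}. ((\<lambda>x. x/2 - sin (2 * m * x) / (4 * m)) has_real_derivative (sin (m * x))^2) (at x within {-pi..pi})"
    proof
      fix x :: real
      have "((\<lambda>x. x/2 - sin (2 * m * x) / (4 * m)) has_real_derivative 1/2 - cos (2 * m * x) * (2 * m) / (4 * m)) (at x within {-pi..pi})"
        by (auto intro!: derivative_eq_intros)
      moreover have "1/2 - cos (2 * m * x) * (2 * m) / (4 * m) = (sin (m * x))^2"
        using mp cos_double_sin[of "m * x"] by (simp add: field_simps)
      ultimately show "((\<lambda>x. x/2 - sin (2 * m * x) / (4 * m)) has_real_derivative (sin (m * x))^2) (at x within {-pi..pi})"
        by simp
    qed
    have g7: "pi / 2 - sin (2 * m * pi) / (4 * m) - (- pi / 2 - sin (2 * m * - pi) / (4 * m)) = pi"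
      using s2m by simp
  show ?thesis by (rule if_dir[OF deriv eq2 g1 g2 g3 g4 g5 g6 g7])
qed

lemma sin_case:
  fixes a a' :: "real \<Rightarrow> real"
  assumes deriv: "\<forall>x\<in>{-pi..pi}. (a has_real_derivative a' x) (at x within {-pi..pi})"
    and eq: "\<forall>x\<in>{-pi..pi}. a x = \<mu> * sin ((2 * real k + 1) / 2 * x)"
  shows "(integral {-pi..pi} a = 0 \<and>
          (\<forall>x\<in>{-pi..pi}. integral {-pi..x} a * a' x - (a x)^2
              + (1/pi) * integral {-pi..pi} (\<lambda>t. (a t)^2) = 0))"
proof (rule sin_case_m[OF deriv eq])
  show "(2 * real k + 1) / 2 > 0" by simp
  have e: "(2 * real k + 1) / 2 * pi = real k * pi + pi/2" by (simp add: field_simps)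
  have "cos (real k * pi + pi/2) = 0" by (simp add: cos_add sin_npi)
  then show "cos ((2 * real k + 1) / 2 * pi) = 0" by (simp only: e)
  have "2 * ((2 * real k + 1) / 2) * pi = real (2*k+1) * pi" by (simp add: field_simps)
  then show "sin (2 * ((2 * real k + 1) / 2) * pi) = 0" by (simp only: sin_npi)
qed



lemma nonzero_near:
  fixes A :: "real \<Rightarrow> real"
  assumes "continuous (at x within S) A" "A x \<noteq> 0"
  shows "\<exists>d>0. \<forall>y\<in>S. dist y x < d \<longrightarrow> A y \<noteq> 0"
proof -
  have "(A \<longlongrightarrow> A x) (at x within S)" using assms(1) by (simp add: continuous_within)
  then have "\<forall>\<^sub>F y in at x within S. A y \<noteq> 0" using assms(2) tendsto_imp_eventually_ne by blast
  then obtain d where "d > 0" "\<forall>y\<in>S. y \<noteq> x \<and> dist y x < d \<longrightarrow> A y \<noteq> 0"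
    unfolding eventually_at by blast
  then show ?thesis using assms(2) by metis
qed

lemma rot_id:
  fixes u v s t :: real
  shows "(u * s + v * t) * t - (u * t - v * s) * s = v * (s^2 + t^2)"
    and "(u * s + v * t) * s + (u * t - v * s) * t = u * (s^2 + t^2)"
  by (simp_all add: algebra_simps power2_eq_square)

lemma only_if_dir:
  fixes a a' :: "real \<Rightarrow> real"
  assumes C2: "C2_on {-pi..pi} a"
    and deriv: "\<forall>x\<in>{-pi..pi}. (a has_real_derivative a' x) (at x within {-pi..pi})"
    and int0: "integral {-pi..pi} a = 0"
    and E: "\<forall>x\<in>{-pi..pi}. integral {-pi..x} a * a' x - (a x)^2
              + (1/pi) * integral {-pi..pi} (\<lambda>t. (a t)^2) = 0"
  shows "((\<exists>\<mu>::real. \<exists>k::nat. k \<ge> 1 \<and> (\<forall>x\<in>{-pi..pi}. a x = \<mu> * cos (real k * x)))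
        \<or> (\<exists>\<mu>::real. \<exists>k::nat. (\<forall>x\<in>{-pi..pi}. a x = \<mu> * sin ((2 * real k + 1) / 2 * x))))"
proof -
  define I where "I = {-pi..pi}"
  obtain f' f'' where fd: "\<forall>x\<in>I. (a has_real_derivative f' x) (at x within I)"
    and f'd: "\<forall>x\<in>I. (f' has_real_derivative f'' x) (at x within I)"
    and f''c: "continuous_on I f''"
    using C2 unfolding C2_on_def I_def by blast
  have a'f: "a' x = f' x" if "x \<in> I" for x
    using deriv_unique_I[of x a "a' x" "f' x"] deriv fd that unfolding I_def by blast
  have ac: "continuous_on I a"
    using fd DERIV_continuous continuous_on_eq_continuous_within by blast
  have f'c: "continuous_on I f'"
    using f'd DERIV_continuous continuous_on_eq_continuous_within by blast
  define A where "A x = integral {-pi..x} a" for x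
  have Ad: "\<forall>x\<in>I. (A has_real_derivative a x) (at x within I)"
    unfolding A_def[abs_def] using integral_has_real_derivative ac unfolding I_def by blast
  have Ac: "continuous_on I A"
    using Ad DERIV_continuous continuous_on_eq_continuous_within by blast
  have mI: "-pi \<in> I" "pi \<in> I" unfolding I_def by auto
  have A0: "A (-pi) = 0" unfolding A_def by simp
  have A1: "A pi = 0" unfolding A_def using int0 by simp
  define c where "c = (1/pi) * integral {-pi..pi} (\<lambda>t. (a t)^2)"
  have E': "\<forall>x\<in>I. A x * f' x - (a x)^2 + c = 0"
    using E a'f unfolding A_def c_def I_def by auto
  have cdef: "c = (a (-pi))^2" using E'[rule_format, OF mI(1)] A0 by simp
  show ?thesis
  proof (cases "c = 0")
    case True
    have "integral {-pi..pi} (\<lambda>t. (a t)^2) = 0" using True unfolding c_def by simp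
    moreover have "continuous_on {-pi..pi} (\<lambda>t. (a t)^2)"
      using ac unfolding I_def by (intro continuous_intros)
    ultimately have "\<forall>x\<in>{-pi..pi}. (a x)^2 = 0"
      using integral_eq_0_iff[of "-pi" pi "\<lambda>t. (a t)^2"] pi_gt_zero by auto
    then have "\<forall>x\<in>{-pi..pi}. a x = 0 * cos (real 1 * x)" by simp
    then show ?thesis by blast
  next
    case False
    then have cpos: "c > 0" using cdef by simp
    have Fd: "((\<lambda>x. A x * f' x - (a x)^2 + c) has_real_derivative
        (a x * f' x + A x * f'' x - 2 * a x * f' x)) (at x within I)" if x: "x \<in> I" for x
      using Ad fd f'd x by (auto intro!: derivative_eq_intros simp: power2_eq_square algebra_simps)
    have key: "A x * f'' x = a x * f' x" if x: "x \<in> I" for x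
    proof -
      have "((\<lambda>x. 0::real) has_real_derivative (a x * f' x + A x * f'' x - 2 * a x * f' x)) (at x within I)"
        by (rule has_field_derivative_transform_within[OF Fd[OF x], where d=1]) (use x E' in auto)
      moreover have "((\<lambda>x. 0::real) has_real_derivative 0) (at x within I)" by simp
      ultimately have "a x * f' x + A x * f'' x - 2 * a x * f' x = 0"
        using deriv_unique_I x unfolding I_def by blast
      then show ?thesis by simp
    qed
    have den: "(A x)^2 + (a x)^2 > 0" if x: "x \<in> I" for x
    proof (cases "A x = 0")
      case True
      then have "(a x)^2 = c" using E'[rule_format, OF x] by simp
      then show ?thesis using cpos True by simp
    next
      case False
      then show ?thesis by (simp add: add_pos_nonneg)
    qed
    define lam where "lam x = (A x * f' x + a x * f'' x) / ((A x)^2 + (a x)^2)" for x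
    have lamA: "f' x = lam x * A x" and lama: "f'' x = lam x * a x" if x: "x \<in> I" for x
    proof -
      have d: "(A x)^2 + (a x)^2 \<noteq> 0" using den[OF x] by linarith
      have k: "A x * f'' x = a x * f' x" using key[OF x] .
      have "lam x * A x * ((A x)^2 + (a x)^2) = (A x)^2 * f' x + a x * (A x * f'' x)"
        unfolding lam_def using d by (simp add: field_simps power2_eq_square)
      also have "\<dots> = f' x * ((A x)^2 + (a x)^2)" using k by (simp add: algebra_simps power2_eq_square)
      finally show "f' x = lam x * A x" using d by (metis mult_right_cancel)
      have "lam x * a x * ((A x)^2 + (a x)^2) = (A x * f'' x) * A x + (a x)^2 * f'' x"
        unfolding lam_def using d k by (simp add: field_simps power2_eq_square)
      also have "\<dots> = f'' x * ((A x)^2 + (a x)^2)" using k by (simp add: algebra_simps power2_eq_square)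
      finally show "f'' x = lam x * a x" using d by (metis mult_right_cancel)
    qed
    have lamc: "continuous_on I lam"
      unfolding lam_def[abs_def] using Ac f'c ac f''c den
      by (intro continuous_intros) (auto simp: less_imp_neq[symmetric] dest: den)
    define Z where "Z = {x\<in>{-pi..pi}. A x = 0}"
    have Zfin: "finite Z" unfolding Z_def
    proof (rule finite_zeros)
      show "continuous_on {-pi..pi} A" using Ac unfolding I_def .
      fix z assume z: "z \<in> {-pi..pi}" "A z = 0"
      then have "(a z)^2 = c" using E'[rule_format, of z] z(1) unfolding I_def by simp
      then have "a z \<noteq> 0" using cpos by auto
      then show "\<exists>e>0. \<forall>y\<in>{-pi..pi}. y \<noteq> z \<and> dist y z < e \<longrightarrow> A y \<noteq> 0"
        using isolated_zero[of A "a z" z "{-pi..pi}"] Ad z unfolding I_def by blast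
    qed
    have lamconst: "lam x = lam (-pi)" if x: "x \<in> I" for x
    proof (rule const_I[OF Zfin])
      show "continuous_on {-pi..pi} lam" using lamc unfolding I_def .
      show "x \<in> {-pi..pi}" using x unfolding I_def .
      fix y assume y: "y \<in> {-pi..pi} - Z"
      then have yI: "y \<in> I" and Ay: "A y \<noteq> 0" unfolding Z_def I_def by auto
      obtain d where d: "d > 0" "\<forall>z\<in>I. dist z y < d \<longrightarrow> A z \<noteq> 0"
        using nonzero_near[of y I A] Ac yI continuous_on_eq_continuous_within by (metis Ay)
      have "((\<lambda>z. f' z / A z) has_real_derivative (f'' y * A y - f' y * a y) / (A y * A y)) (at y within I)"
        using f'd Ad yI Ay by (auto intro!: DERIV_divide)
      moreover have "(f'' y * A y - f' y * a y) / (A y * A y) = 0"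
        using key[OF yI] by (simp add: mult.commute)
      ultimately have "((\<lambda>z. f' z / A z) has_real_derivative 0) (at y within I)" by simp
      then have "(lam has_real_derivative 0) (at y within I)"
        by (rule has_field_derivative_transform_within[OF _ d(1) yI]) (use d lamA in auto)
      then show "(lam has_real_derivative 0) (at y within {-pi..pi})" unfolding I_def .
    qed
    define L where "L = lam (-pi)"
    have f'L: "f' x = L * A x" if "x \<in> I" for x using lamA[OF that] lamconst[OF that] L_def by simp
    obtain \<xi> where xi: "-pi < \<xi>" "\<xi> < pi" "(*) (a \<xi>) = (\<lambda>v. 0)"
    proof -
      have "\<exists>z. -pi < z \<and> z < pi \<and> (*) (a z) = (\<lambda>v. 0)"
      proof (rule Rolle_deriv[where f=A])
        show "-pi < pi" using pi_gt_zero by linarith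
        show "A (-pi) = A pi" using A0 A1 by simp
        show "continuous_on {-pi..pi} A" using Ac unfolding I_def .
        fix x assume "-pi < x" "x < pi"
        then have "(A has_real_derivative a x) (at x within {-pi..pi})" using Ad unfolding I_def by auto
        then have "(A has_real_derivative a x) (at x)" using at_within_Icc_at \<open>-pi < x\<close> \<open>x < pi\<close> by metis
        then show "(A has_derivative (*) (a x)) (at x)" by (simp add: has_field_derivative_def)
      qed
      then show ?thesis using that by blast
    qed
    have axi: "a \<xi> = 0" using fun_cong[OF xi(3), of 1] by simp
    have xiI: "\<xi> \<in> I" using xi unfolding I_def by auto
    have h1: "L * (A \<xi>)^2 = A \<xi> * f' \<xi>" using f'L[OF xiI] by (simp add: power2_eq_square)
    have h2: "A \<xi> * f' \<xi> + c = 0" using E'[rule_format, OF xiI] axi by simp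
    have "L * (A \<xi>)^2 = - c" using h1 h2 by linarith
    then have Lneg: "L < 0"
    proof -
      assume h: "L * (A \<xi>)^2 = - c"
      show "L < 0"
      proof (rule ccontr)
        assume "\<not> L < 0"
        then have "L * (A \<xi>)^2 \<ge> 0" by simp
        then show False using h cpos by linarith
      qed
    qed
    define w where "w = sqrt (- L)"
    have wpos: "w > 0" and w2: "w * w = - L" unfolding w_def using Lneg by auto
    define P where "P x = w * A x * sin (w * (x + pi)) + a x * cos (w * (x + pi))" for x
    define Q where "Q x = w * A x * cos (w * (x + pi)) - a x * sin (w * (x + pi))" for x
    have Pd: "(P has_real_derivative 0) (at x within I)" if x: "x \<in> I" for x
    proof -
      have "(P has_real_derivative (w * a x * sin (w * (x + pi)) + w * A x * (cos (w * (x + pi)) * w)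
          + f' x * cos (w * (x + pi)) - a x * (sin (w * (x + pi)) * w))) (at x within I)"
        unfolding P_def[abs_def] using Ad fd x by (auto intro!: derivative_eq_intros)
      moreover have "w * a x * sin (w * (x + pi)) + w * A x * (cos (w * (x + pi)) * w)
          + f' x * cos (w * (x + pi)) - a x * (sin (w * (x + pi)) * w) = (w * w + L) * A x * cos (w * (x + pi))"
        using f'L[OF x] by (simp add: algebra_simps)
      ultimately show ?thesis using w2 by simp
    qed
    have Qd: "(Q has_real_derivative 0) (at x within I)" if x: "x \<in> I" for x
    proof -
      have "(Q has_real_derivative (w * a x * cos (w * (x + pi)) - w * A x * (sin (w * (x + pi)) * w)
          - (f' x * sin (w * (x + pi)) + a x * (cos (w * (x + pi)) * w)))) (at x within I)"
        unfolding Q_def[abs_def] using Ad fd x by (auto intro!: derivative_eq_intros)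
      moreover have "w * a x * cos (w * (x + pi)) - w * A x * (sin (w * (x + pi)) * w)
          - (f' x * sin (w * (x + pi)) + a x * (cos (w * (x + pi)) * w)) = - (w * w + L) * A x * sin (w * (x + pi))"
        using f'L[OF x] by (simp add: algebra_simps)
      ultimately show ?thesis using w2 by simp
    qed
    have Pc: "continuous_on {-pi..pi} P"
      using Pd DERIV_continuous continuous_on_eq_continuous_within unfolding I_def by blast
    have Qc: "continuous_on {-pi..pi} Q"
      using Qd DERIV_continuous continuous_on_eq_continuous_within unfolding I_def by blast
    define \<beta> where "\<beta> = a (-pi)"
    have Pv: "P x = \<beta>" if x: "x \<in> I" for x
      using const_I[of "{}" P x] Pc Pd x A0 unfolding I_def \<beta>_def P_def by auto
    have Qv: "Q x = 0" if x: "x \<in> I" for x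
      using const_I[of "{}" Q x] Qc Qd x A0 unfolding I_def Q_def by auto
    have aform: "a x = \<beta> * cos (w * (x + pi))" if x: "x \<in> I" for x
    proof -
      have "P x * cos (w * (x + pi)) - Q x * sin (w * (x + pi)) = a x * ((sin (w * (x + pi)))^2 + (cos (w * (x + pi)))^2)"
        unfolding P_def Q_def by (rule rot_id(1))
      then have "a x = P x * cos (w * (x + pi)) - Q x * sin (w * (x + pi))"
        by (simp only: sin_cos_squared_add mult_1_right)
      then show ?thesis using Pv[OF x] Qv[OF x] by simp
    qed
    have Aform: "w * A x = \<beta> * sin (w * (x + pi))" if x: "x \<in> I" for x
    proof -
      have "P x * sin (w * (x + pi)) + Q x * cos (w * (x + pi)) = w * A x * ((sin (w * (x + pi)))^2 + (cos (w * (x + pi)))^2)"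
        unfolding P_def Q_def by (rule rot_id(2))
      then have "w * A x = P x * sin (w * (x + pi)) + Q x * cos (w * (x + pi))"
        by (simp only: sin_cos_squared_add mult_1_right)
      then show ?thesis using Pv[OF x] Qv[OF x] by simp
    qed
    have bnz: "\<beta> \<noteq> 0" using cdef cpos \<beta>_def by auto
    have "sin (w * (2 * pi)) = 0" using Aform[OF mI(2)] A1 bnz by simp
    then obtain i :: int where i: "w * (2 * pi) = of_int i * pi" using sin_zero_iff_int2 by blast
    have wi: "2 * w = of_int i" using i by (simp add: algebra_simps)
    then have "i > 0" using wpos by simp
    define n where "n = nat i"
    have n: "i = int n" "n \<ge> 1" unfolding n_def using \<open>i > 0\<close> by auto
    have wn: "w = real n / 2" using wi n by simp
    show ?thesis
    proof (cases "even n")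
      case True
      then obtain k where k: "n = 2 * k" by blast
      have "k \<ge> 1" using n k by simp
      moreover have "\<forall>x\<in>{-pi..pi}. a x = (\<beta> * (-1)^k) * cos (real k * x)"
      proof
        fix x assume "x \<in> {-pi..pi}"
        then have ax: "a x = \<beta> * cos (w * (x + pi))" using aform[of x] unfolding I_def by simp
        have "w * (x + pi) = real k * x + real k * pi" unfolding wn k by (simp add: algebra_simps)
        then have "cos (w * (x + pi)) = cos (real k * x) * (-1)^k" by (simp add: cos_add)
        then show "a x = (\<beta> * (-1)^k) * cos (real k * x)" using ax by simp
      qed
      ultimately show ?thesis by blast
    next
      case False
      then obtain k where k: "n = 2 * k + 1" using oddE by blast
      have "\<forall>x\<in>{-pi..pi}. a x = (- \<beta> * (-1)^k) * sin ((2 * real k + 1) / 2 * x)"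
      proof
        fix x assume "x \<in> {-pi..pi}"
        then have ax: "a x = \<beta> * cos (w * (x + pi))" using aform[of x] unfolding I_def by simp
        have e: "w * (x + pi) = (2 * real k + 1) / 2 * x + (real k * pi + pi / 2)" unfolding wn k by (simp add: algebra_simps add_divide_distrib)
        have c1: "cos (real k * pi + pi / 2) = 0" by (simp add: cos_add)
        have s1: "sin (real k * pi + pi / 2) = (-1)^k" by (simp add: sin_add)
        have "cos (w * (x + pi)) = - ((-1)^k * sin ((2 * real k + 1) / 2 * x))"
          unfolding e cos_add c1 s1 by simp
        then show "a x = (- \<beta> * (-1)^k) * sin ((2 * real k + 1) / 2 * x)" using ax by simp
      qed
      then show ?thesis by blast
    qed
  qed
qed

theorem proposition2p1:
  fixes a a' :: "real \<Rightarrow> real"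
  assumes C2: "C2_on {-pi..pi} a"
    and deriv: "\<forall>x\<in>{-pi..pi}. (a has_real_derivative a' x) (at x within {-pi..pi})"
  shows "(integral {-pi..pi} a = 0 \<and>
          (\<forall>x\<in>{-pi..pi}. integral {-pi..x} a * a' x - (a x)^2
              + (1/pi) * integral {-pi..pi} (\<lambda>t. (a t)^2) = 0))
     \<longleftrightarrow> ((\<exists>\<mu>::real. \<exists>k::nat. k \<ge> 1 \<and> (\<forall>x\<in>{-pi..pi}. a x = \<mu> * cos (real k * x)))
        \<or> (\<exists>\<mu>::real. \<exists>k::nat. (\<forall>x\<in>{-pi..pi}. a x = \<mu> * sin ((2 * real k + 1) / 2 * x))))"
proof (rule iffI)
  assume h: "integral {-pi..pi} a = 0 \<and>
          (\<forall>x\<in>{-pi..pi}. integral {-pi..x} a * a' x - (a x)^2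
              + (1/pi) * integral {-pi..pi} (\<lambda>t. (a t)^2) = 0)"
  show "(\<exists>\<mu>::real. \<exists>k::nat. k \<ge> 1 \<and> (\<forall>x\<in>{-pi..pi}. a x = \<mu> * cos (real k * x)))
        \<or> (\<exists>\<mu>::real. \<exists>k::nat. (\<forall>x\<in>{-pi..pi}. a x = \<mu> * sin ((2 * real k + 1) / 2 * x)))"
    using only_if_dir[OF C2 deriv] h by blast
next
  assume "(\<exists>\<mu>::real. \<exists>k::nat. k \<ge> 1 \<and> (\<forall>x\<in>{-pi..pi}. a x = \<mu> * cos (real k * x)))
        \<or> (\<exists>\<mu>::real. \<exists>k::nat. (\<forall>x\<in>{-pi..pi}. a x = \<mu> * sin ((2 * real k + 1) / 2 * x)))"
  then show "integral {-pi..pi} a = 0 \<and>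
          (\<forall>x\<in>{-pi..pi}. integral {-pi..x} a * a' x - (a x)^2
              + (1/pi) * integral {-pi..pi} (\<lambda>t. (a t)^2) = 0)"
  proof (elim disjE exE conjE)
    fix \<mu> k assume "(1::nat) \<le> k" "\<forall>x\<in>{-pi..pi}. a x = \<mu> * cos (real k * x)"
    then show ?thesis by (rule cos_case[OF deriv])
  next
    fix \<mu> k assume "\<forall>x\<in>{-pi..pi}. a x = \<mu> * sin ((2 * real k + 1) / 2 * x)"
    then show ?thesis by (rule sin_case[OF deriv])
  qed
qed

end
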